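(* Let $t\in\mathbb{R}$ be such that $\beta_X<h(t)<\infty$ and $\mathcal{D}_t^\circ\ne\emptyset$. Then $x\mapsto M_x(t)$ is right-continuous on $x\ge0$, and for every $\varepsilon>0$ with $h(t)+\varepsilon\in\mathcal{D}_t^\circ$ there exists $K_\varepsilon>0$ such that $$M_x(t)\le K_\varepsilon e^{(h(t)+\varepsilon)x}\quad\forall x>0.$$ Furthermore, if either $h(t)\ge0$ or $\varepsilon<|h(t)|$, one can take $K_\varepsilon=\frac{H(h(t))}{1-\rho(t,\varepsilon)}$, where $H(a)=E[e^{-(0\wedge a)X}]+1$ and $\rho(t,\varepsilon)=E[e^{tY-(h(t)+\varepsilon)X}]$.
   Context: $(X_n,Y_n)_{n\ge1}$ are i.i.d. copies of $(X,Y)\in\mathbb{R}^2$; $X,Y$ nondegenerate and $\Pr\{\sup_{n\ge1}\sum_{i=1}^nX_i=\infty\}=1$. For $x\ge0$, $N(x)=\max\{n:\sum_{i=1}^kX_i\le x\ \forall k\le n\}$ if $X_1\le x$, else $N(x)=0$; $W(x)=\sum_{i=1}^{N(x)}Y_i$; $M_x(t)=E[e^{tW(x)}]$. $\mathcal{D}_t=\{s:E[e^{tY-sX}]\le1\}$, $h(t)=\inf\mathcal{D}_t$ ($\inf\emptyset=\infty$), $\beta_X=\limsup_{x\to\infty}\frac1x\log\Pr\{X>x\}$. $A^\circ$ is the interior of $A$, $a\wedge b=\min\{a,b\}$. *)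

theory Defs
  imports "HOL-Probability.Probability"
begin

text \<open>Indices are 0-based: the paper's (X_1,Y_1),(X_2,Y_2),... are X 0, X 1, ... here.\<close>

text \<open>N(x) = max{n : S_k <= x for all 1 <= k <= n} (0 if X_1 > x), where S_k is the k-th
  partial sum; equivalently the least m with S_(m+1) > x.\<close>
definition Nx :: "(nat \<Rightarrow> 'a \<Rightarrow> real) \<Rightarrow> real \<Rightarrow> 'a \<Rightarrow> nat" where
  "Nx X x \<omega> = (LEAST m. (\<Sum>i\<le>m. X i \<omega>) > x)"

definition Wx :: "(nat \<Rightarrow> 'a \<Rightarrow> real) \<Rightarrow> (nat \<Rightarrow> 'a \<Rightarrow> real) \<Rightarrow> real \<Rightarrow> 'a \<Rightarrow> real" where
  "Wx X Y x \<omega> = (\<Sum>i<Nx X x \<omega>. Y i \<omega>)"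

definition Mx :: "'a measure \<Rightarrow> (nat \<Rightarrow> 'a \<Rightarrow> real) \<Rightarrow> (nat \<Rightarrow> 'a \<Rightarrow> real) \<Rightarrow> real \<Rightarrow> real \<Rightarrow> ennreal" where
  "Mx M X Y x t = (\<integral>\<^sup>+ \<omega>. ennreal (exp (t * Wx X Y x \<omega>)) \<partial>M)"

definition Dt :: "'a measure \<Rightarrow> (nat \<Rightarrow> 'a \<Rightarrow> real) \<Rightarrow> (nat \<Rightarrow> 'a \<Rightarrow> real) \<Rightarrow> real \<Rightarrow> real set" where
  "Dt M X Y t = {s. (\<integral>\<^sup>+ \<omega>. ennreal (exp (t * Y 0 \<omega> - s * X 0 \<omega>)) \<partial>M) \<le> 1}"

definition ht :: "'a measure \<Rightarrow> (nat \<Rightarrow> 'a \<Rightarrow> real) \<Rightarrow> (nat \<Rightarrow> 'a \<Rightarrow> real) \<Rightarrow> real \<Rightarrow> ereal" where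
  "ht M X Y t = Inf (ereal ` Dt M X Y t)"

definition betaX :: "'a measure \<Rightarrow> (nat \<Rightarrow> 'a \<Rightarrow> real) \<Rightarrow> ereal" where
  "betaX M X = Limsup at_top (\<lambda>x::real.
     let p = measure M {\<omega> \<in> space M. X 0 \<omega> > x} in
     if p > 0 then ereal (ln p / x) else -\<infinity>)"

definition Hfun :: "'a measure \<Rightarrow> (nat \<Rightarrow> 'a \<Rightarrow> real) \<Rightarrow> real \<Rightarrow> ennreal" where
  "Hfun M X a = (\<integral>\<^sup>+ \<omega>. ennreal (exp (- (min 0 a) * X 0 \<omega>)) \<partial>M) + 1"

definition rho :: "'a measure \<Rightarrow> (nat \<Rightarrow> 'a \<Rightarrow> real) \<Rightarrow> (nat \<Rightarrow> 'a \<Rightarrow> real) \<Rightarrow> real \<Rightarrow> real \<Rightarrow> ennreal" where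
  "rho M X Y t \<epsilon> = (\<integral>\<^sup>+ \<omega>. ennreal (exp (t * Y 0 \<omega> - (real_of_ereal (ht M X Y t) + \<epsilon>) * X 0 \<omega>)) \<partial>M)"

end

theory Submission
  imports Defs
begin


lemma Nx_props:
  assumes "\<exists>m. x < (\<Sum>i\<le>m. X i \<omega>)"
  shows "x < (\<Sum>i<Suc (Nx X x \<omega>). X i \<omega>)"
    and "0 \<le> x \<Longrightarrow> (\<Sum>i<Nx X x \<omega>. X i \<omega>) \<le> x"
proof -
  have "x < (\<Sum>i\<le>Nx X x \<omega>. X i \<omega>)"
    unfolding Nx_def using assms by (rule LeastI_ex)
  then show "x < (\<Sum>i<Suc (Nx X x \<omega>). X i \<omega>)" by (simp add: lessThan_Suc_atMost)
  assume "0 \<le> x"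
  show "(\<Sum>i<Nx X x \<omega>. X i \<omega>) \<le> x"
  proof (cases "Nx X x \<omega>")
    case 0 then show ?thesis using \<open>0 \<le> x\<close> by simp
  next
    case (Suc k)
    then have "k < (LEAST m. x < (\<Sum>i\<le>m. X i \<omega>))" by (simp add: Nx_def)
    then have "\<not> x < (\<Sum>i\<le>k. X i \<omega>)" by (rule not_less_Least)
    then show ?thesis using Suc by (simp add: lessThan_Suc_atMost)
  qed
qed

lemma Nx_eq:
  assumes "x < (\<Sum>i\<le>m. X i \<omega>)" "\<And>k. k < m \<Longrightarrow> (\<Sum>i\<le>k. X i \<omega>) \<le> x"
  shows "Nx X x \<omega> = m"
  unfolding Nx_def
  by (rule Least_equality) (use assms in \<open>auto simp: not_less[symmetric]\<close>)


lemma Nx_meas: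
  assumes "\<And>n. X n \<in> borel_measurable M"
  shows "Nx X x \<in> M \<rightarrow>\<^sub>M count_space UNIV"
proof -
  have [measurable]: "(\<lambda>\<omega>. \<Sum>i\<le>m. X i \<omega>) \<in> borel_measurable M" for m
    using assms by (intro borel_measurable_sum) auto
  have "\<And>m. Measurable.pred M (\<lambda>\<omega>. x < (\<Sum>i\<le>m. X i \<omega>))"
    by measurable
  then show ?thesis unfolding Nx_def[abs_def] by (rule measurable_Least)
qed

lemma Wx_meas:
  assumes "\<And>n. X n \<in> borel_measurable M" "\<And>n. Y n \<in> borel_measurable M"
  shows "Wx X Y x \<in> borel_measurable M"
proof -
  have "(\<lambda>\<omega>. (\<lambda>n \<omega>. \<Sum>i<n. Y i \<omega>) (Nx X x \<omega>) \<omega>) \<in> borel_measurable M"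
    by (rule measurable_compose_countable[OF _ Nx_meas[OF assms(1)]]) (use assms in \<open>auto intro!: borel_measurable_sum\<close>)
  then show ?thesis unfolding Wx_def[abs_def] by simp
qed

lemma exp_strict: "x \<noteq> 0 \<Longrightarrow> 1 + x < exp (x::real)"
proof -
  assume "x \<noteq> 0"
  show ?thesis
  proof (cases "1 + x/2 < 0")
    case True then show ?thesis using exp_gt_zero[of x] by linarith
  next
    case False
    have "(1 + x/2)^2 \<le> exp (x/2) ^ 2"
      using False exp_ge_add_one_self[of "x/2"] by (intro power_mono) auto
    also have "exp (x/2) ^ 2 = exp x" by (simp add: exp_double[symmetric])
    finally have "1 + x + x^2/4 \<le> exp x" by (simp add: power2_eq_square field_simps)
    moreover have "0 < x^2" using \<open>x \<noteq> 0\<close> by simp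
    ultimately show ?thesis by linarith
  qed
qed

lemma exp_strict_convex:
  fixes a b l :: real
  assumes "a \<noteq> b" "0 < l" "l < 1"
  shows "exp (l*a + (1-l)*b) < l * exp a + (1-l) * exp b"
proof -
  define c where "c = l*a + (1-l)*b"
  have "a - c \<noteq> 0"
  proof
    assume "a - c = 0"
    then have "(1-l)*(a - b) = 0" unfolding c_def by (simp add: algebra_simps)
    then show False using assms by simp
  qed
  have ea: "exp a = exp c * exp (a - c)" by (simp add: exp_diff)
  have eb: "exp b = exp c * exp (b - c)" by (simp add: exp_diff)
  have "exp c * (1 + (a-c)) < exp c * exp (a - c)"
    using exp_strict[OF \<open>a - c \<noteq> 0\<close>] by simp
  moreover have "exp c * (1 + (b-c)) \<le> exp c * exp (b - c)"
    using exp_ge_add_one_self[of "b-c"] by simp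
  ultimately have "l * (exp c * (1 + (a-c))) + (1-l) * (exp c * (1 + (b-c)))
     < l * exp a + (1-l) * exp b"
    unfolding ea eb using assms
    by (intro add_less_le_mono mult_strict_left_mono mult_left_mono) auto
  moreover have "l * (exp c * (1 + (a-c))) + (1-l) * (exp c * (1 + (b-c))) = exp c"
    unfolding c_def by (simp add: algebra_simps)
  ultimately have "exp c < l * exp a + (1-l) * exp b" by linarith
  then show ?thesis by (simp only: c_def)
qed

lemma ennreal_le_suminf: "f i \<le> (\<Sum>i. f i :: ennreal)"
proof (rule ccontr)
  assume "\<not> f i \<le> (\<Sum>i. f i)"
  then have "(\<Sum>i. f i) < f i" by (simp add: not_le)
  then have "f i < f i" by (rule ennreal_suminf_lessD)
  then show False by simp
qed



definition gs :: "real \<Rightarrow> real \<Rightarrow> real" where "gs s x = (if 0 \<le> s then 1 else exp (-s*x))"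

locale L = prob_space M for M :: "'a measure" +
  fixes X Y :: "nat \<Rightarrow> 'a \<Rightarrow> real" and t :: real
  assumes mX[measurable]: "\<And>n. X n \<in> borel_measurable M"
    and mY[measurable]: "\<And>n. Y n \<in> borel_measurable M"
    and ind: "indep_vars (\<lambda>_. borel \<Otimes>\<^sub>M borel) (\<lambda>n \<omega>. (X n \<omega>, Y n \<omega>)) UNIV"
    and idd: "\<And>n. distr M (borel \<Otimes>\<^sub>M borel) (\<lambda>\<omega>. (X n \<omega>, Y n \<omega>))
              = distr M (borel \<Otimes>\<^sub>M borel) (\<lambda>\<omega>. (X 0 \<omega>, Y 0 \<omega>))"
    and AEinf: "AE \<omega> in M. (SUP n. ereal (\<Sum>i\<le>n. X i \<omega>)) = \<infinity>"
begin

lemma same_dist: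
  assumes f: "f \<in> borel_measurable (borel \<Otimes>\<^sub>M borel)"
  shows "(\<integral>\<^sup>+\<omega>. f (X n \<omega>, Y n \<omega>) \<partial>M) = (\<integral>\<^sup>+\<omega>. f (X 0 \<omega>, Y 0 \<omega>) \<partial>M)"
proof -
  have f': "f \<in> borel_measurable (distr M (borel \<Otimes>\<^sub>M borel) (\<lambda>\<omega>. (X k \<omega>, Y k \<omega>)))" for k
    unfolding measurable_distr_eq1 by (rule f)
  have m: "(\<lambda>\<omega>. (X k \<omega>, Y k \<omega>)) \<in> M \<rightarrow>\<^sub>M borel \<Otimes>\<^sub>M borel" for k by (intro measurable_Pair mX mY)
  have "(\<integral>\<^sup>+\<omega>. f (X n \<omega>, Y n \<omega>) \<partial>M) = (\<integral>\<^sup>+p. f p \<partial>distr M (borel \<Otimes>\<^sub>M borel) (\<lambda>\<omega>. (X n \<omega>, Y n \<omega>)))"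
    by (rule nn_integral_distr[OF m[of n] f'[of n], symmetric])
  also have "\<dots> = (\<integral>\<^sup>+p. f p \<partial>distr M (borel \<Otimes>\<^sub>M borel) (\<lambda>\<omega>. (X 0 \<omega>, Y 0 \<omega>)))"
    by (simp only: idd[of n])
  also have "\<dots> = (\<integral>\<^sup>+\<omega>. f (X 0 \<omega>, Y 0 \<omega>) \<partial>M)"
    by (rule nn_integral_distr[OF m[of 0] f'[of 0]])
  finally show ?thesis .
qed

lemma prod_int:
  assumes fin: "finite I"
    and F: "\<And>i. F i \<in> borel_measurable (borel \<Otimes>\<^sub>M borel)"
    and nn: "\<And>i p. 0 \<le> F i p"
  shows "(\<integral>\<^sup>+\<omega>. (\<Prod>i\<in>I. ennreal (F i (X i \<omega>, Y i \<omega>))) \<partial>M)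
       = (\<Prod>i\<in>I. \<integral>\<^sup>+\<omega>. ennreal (F i (X i \<omega>, Y i \<omega>)) \<partial>M)"
proof -
  have "indep_vars (\<lambda>_. borel) (\<lambda>i \<omega>. (\<lambda>p. ennreal (F i p)) (X i \<omega>, Y i \<omega>)) UNIV"
    by (rule indep_vars_compose2[OF ind]) (rule measurable_compose[OF F measurable_ennreal])
  then have "indep_vars (\<lambda>_. borel) (\<lambda>i \<omega>. ennreal (F i (X i \<omega>, Y i \<omega>))) I"
    by (rule indep_vars_subset) auto
  then show ?thesis
    by (rule indep_vars_nn_integral[OF fin]) auto
qed

definition phi where "phi s = (\<integral>\<^sup>+\<omega>. ennreal (exp (t * Y 0 \<omega> - s * X 0 \<omega>)) \<partial>M)"
definition Cs where "Cs s = (\<integral>\<^sup>+\<omega>. ennreal (gs s (X 0 \<omega>)) \<partial>M)"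

lemma term_int:
  "(\<integral>\<^sup>+\<omega>. (\<Prod>i<n. ennreal (exp (t * Y i \<omega> - s * X i \<omega>))) * ennreal (gs s (X n \<omega>)) \<partial>M)
    = phi s ^ n * Cs s"
proof -
  define F where "F i p = (if i < n then exp (t * snd p - s * fst p) else gs s (fst p))" for i p
  have Fm: "F i \<in> borel_measurable (borel \<Otimes>\<^sub>M borel)" for i
    unfolding F_def[abs_def] gs_def by measurable
  have Fnn: "0 \<le> F i p" for i p unfolding F_def gs_def by auto
  have "(\<integral>\<^sup>+\<omega>. (\<Prod>i<n. ennreal (exp (t * Y i \<omega> - s * X i \<omega>))) * ennreal (gs s (X n \<omega>)) \<partial>M)
      = (\<integral>\<^sup>+\<omega>. (\<Prod>i\<in>{..<Suc n}. ennreal (F i (X i \<omega>, Y i \<omega>))) \<partial>M)"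
    by (intro nn_integral_cong) (simp add: F_def)
  also have "\<dots> = (\<Prod>i\<in>{..<Suc n}. \<integral>\<^sup>+\<omega>. ennreal (F i (X i \<omega>, Y i \<omega>)) \<partial>M)"
    by (rule prod_int[OF _ Fm Fnn]) simp
  also have "\<dots> = (\<Prod>i\<in>{..<Suc n}. \<integral>\<^sup>+\<omega>. ennreal (F i (X 0 \<omega>, Y 0 \<omega>)) \<partial>M)"
  proof (rule prod.cong[OF refl])
    fix i
    show "(\<integral>\<^sup>+\<omega>. ennreal (F i (X i \<omega>, Y i \<omega>)) \<partial>M) = (\<integral>\<^sup>+\<omega>. ennreal (F i (X 0 \<omega>, Y 0 \<omega>)) \<partial>M)"
      using same_dist[of "\<lambda>p. ennreal (F i p)" i] measurable_compose[OF Fm measurable_ennreal] by simp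
  qed
  also have "\<dots> = phi s ^ n * Cs s"
    by (simp add: F_def phi_def Cs_def)
  finally show ?thesis .
qed

definition G where "G a b \<omega> = (\<Sum>n. if (\<Sum>i<n. X i \<omega>) \<le> a \<and> b < (\<Sum>i<Suc n. X i \<omega>)
   then ennreal (exp (t * (\<Sum>i<n. Y i \<omega>))) else 0)"

lemma pw_bound:
  assumes "(\<Sum>i<n. X i \<omega>) \<le> a" "b < (\<Sum>i<Suc n. X i \<omega>)"
  shows "ennreal (exp (t * (\<Sum>i<n. Y i \<omega>))) \<le> ennreal (exp (s * (if 0 \<le> s then a else b))) *
     ((\<Prod>i<n. ennreal (exp (t * Y i \<omega> - s * X i \<omega>))) * ennreal (gs s (X n \<omega>)))"
proof -
  define SX where "SX = (\<Sum>i<n. X i \<omega>)"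
  define SY where "SY = (\<Sum>i<n. Y i \<omega>)"
  have P: "(\<Prod>i<n. ennreal (exp (t * Y i \<omega> - s * X i \<omega>))) = ennreal (exp (t * SY - s * SX))"
    by (simp add: prod_ennreal exp_sum[symmetric] SX_def SY_def sum_subtractf sum_distrib_left)
  have "exp (t * SY) \<le> exp (s * (if 0 \<le> s then a else b)) * exp (t * SY - s * SX) * gs s (X n \<omega>)"
  proof (cases "0 \<le> s")
    case True
    have "s * SX \<le> s * a" using True assms(1) by (simp add: SX_def mult_left_mono)
    then show ?thesis using True by (simp add: gs_def exp_add[symmetric])
  next
    case False
    have "b < SX + X n \<omega>" using assms(2) by (simp add: SX_def)
    then have "s * (SX + X n \<omega>) \<le> s * b" using False by (simp add: mult_left_mono_neg)
    then show ?thesis using False by (simp add: gs_def exp_add[symmetric] algebra_simps)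
  qed
  then show ?thesis
    unfolding P SY_def[symmetric] by (simp add: ennreal_mult'[symmetric] gs_def)
qed

lemma term_meas:
  "(\<lambda>\<omega>. if (\<Sum>i<n. X i \<omega>) \<le> a \<and> b < (\<Sum>i<Suc n. X i \<omega>)
   then ennreal (exp (t * (\<Sum>i<n. Y i \<omega>))) else 0) \<in> borel_measurable M"
  by measurable

lemma prod_meas: "(\<lambda>\<omega>. (\<Prod>i<n. ennreal (exp (t * Y i \<omega> - s * X i \<omega>))) * ennreal (gs s (X n \<omega>))) \<in> borel_measurable M"
  unfolding gs_def by measurable

lemma G_int:
  "(\<integral>\<^sup>+\<omega>. G a b \<omega> \<partial>M) \<le> ennreal (exp (s * (if 0 \<le> s then a else b))) * (\<Sum>n. phi s ^ n) * Cs s"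
proof -
  let ?c = "ennreal (exp (s * (if 0 \<le> s then a else b)))"
  have "(\<integral>\<^sup>+\<omega>. G a b \<omega> \<partial>M) = (\<Sum>n. \<integral>\<^sup>+\<omega>. (if (\<Sum>i<n. X i \<omega>) \<le> a \<and> b < (\<Sum>i<Suc n. X i \<omega>)
   then ennreal (exp (t * (\<Sum>i<n. Y i \<omega>))) else 0) \<partial>M)"
    unfolding G_def by (rule nn_integral_suminf) (rule term_meas)
  also have "\<dots> \<le> (\<Sum>n. ?c * (phi s ^ n * Cs s))"
  proof (rule suminf_le)
    fix n
    have "(\<integral>\<^sup>+\<omega>. (if (\<Sum>i<n. X i \<omega>) \<le> a \<and> b < (\<Sum>i<Suc n. X i \<omega>)
      then ennreal (exp (t * (\<Sum>i<n. Y i \<omega>))) else 0) \<partial>M)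
      \<le> (\<integral>\<^sup>+\<omega>. ?c * ((\<Prod>i<n. ennreal (exp (t * Y i \<omega> - s * X i \<omega>))) * ennreal (gs s (X n \<omega>))) \<partial>M)"
    proof (intro nn_integral_mono)
      fix \<omega>
      show "(if (\<Sum>i<n. X i \<omega>) \<le> a \<and> b < (\<Sum>i<Suc n. X i \<omega>)
        then ennreal (exp (t * (\<Sum>i<n. Y i \<omega>))) else 0)
        \<le> ?c * ((\<Prod>i<n. ennreal (exp (t * Y i \<omega> - s * X i \<omega>))) * ennreal (gs s (X n \<omega>)))"
      proof (cases "(\<Sum>i<n. X i \<omega>) \<le> a \<and> b < (\<Sum>i<Suc n. X i \<omega>)")
        case True
        then have "ennreal (exp (t * (\<Sum>i<n. Y i \<omega>))) \<le> ?c * ((\<Prod>i<n. ennreal (exp (t * Y i \<omega> - s * X i \<omega>))) * ennreal (gs s (X n \<omega>)))"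
          by (intro pw_bound) auto
        then show ?thesis by (simp only: if_P[OF True])
      next
        case False
        show ?thesis by (simp only: if_not_P[OF False] zero_le)
      qed
    qed
    also have "\<dots> = ?c * (phi s ^ n * Cs s)"
      by (simp only: nn_integral_cmult[OF prod_meas] term_int)
    finally show "(\<integral>\<^sup>+\<omega>. (if (\<Sum>i<n. X i \<omega>) \<le> a \<and> b < (\<Sum>i<Suc n. X i \<omega>)
      then ennreal (exp (t * (\<Sum>i<n. Y i \<omega>))) else 0) \<partial>M) \<le> ?c * (phi s ^ n * Cs s)" .
  qed auto
  also have "\<dots> = ?c * (\<Sum>n. phi s ^ n) * Cs s"
    by (simp add: mult.assoc)
  finally show ?thesis .
qed

lemma AE_exists: "AE \<omega> in M. \<forall>x. \<exists>m. x < (\<Sum>i\<le>m. X i \<omega>)"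
  using AEinf
proof (eventually_elim)
  fix \<omega> assume inf: "(SUP n. ereal (\<Sum>i\<le>n. X i \<omega>)) = \<infinity>"
  show "\<forall>x. \<exists>m. x < (\<Sum>i\<le>m. X i \<omega>)"
  proof (rule ccontr)
    assume "\<not> (\<forall>x. \<exists>m. x < (\<Sum>i\<le>m. X i \<omega>))"
    then obtain x where "\<And>m. (\<Sum>i\<le>m. X i \<omega>) \<le> x" by (auto simp: not_less)
    then have "(SUP n. ereal (\<Sum>i\<le>n. X i \<omega>)) \<le> ereal x" by (intro SUP_least) auto
    then show False using inf by simp
  qed
qed

lemma W_le_G:
  assumes ex: "\<forall>x. \<exists>m. x < (\<Sum>i\<le>m. X i \<omega>)" and "0 \<le> y" "y \<le> a" "b \<le> y"
  shows "ennreal (exp (t * Wx X Y y \<omega>)) \<le> G a b \<omega>"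
proof -
  define n where "n = Nx X y \<omega>"
  have 1: "y < (\<Sum>i<Suc n. X i \<omega>)" unfolding n_def using ex by (intro Nx_props(1)) auto
  have 2: "(\<Sum>i<n. X i \<omega>) \<le> y" unfolding n_def using ex assms(2) by (intro Nx_props(2)) auto
  have c: "(\<Sum>i<n. X i \<omega>) \<le> a \<and> b < (\<Sum>i<Suc n. X i \<omega>)" using 1 2 assms by linarith
  have "ennreal (exp (t * Wx X Y y \<omega>)) = (if (\<Sum>i<n. X i \<omega>) \<le> a \<and> b < (\<Sum>i<Suc n. X i \<omega>)
   then ennreal (exp (t * (\<Sum>i<n. Y i \<omega>))) else 0)"
    by (subst if_P[OF c]) (simp add: Wx_def n_def)
  also have "\<dots> \<le> G a b \<omega>" unfolding G_def by (rule ennreal_le_suminf)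
  finally show ?thesis .
qed

lemma geom:
  assumes "0 \<le> r" "r < 1"
  shows "(\<Sum>n. ennreal r ^ n) = ennreal (1 / (1 - r))"
proof -
  have "(\<Sum>n. ennreal r ^ n) = (\<Sum>n. ennreal (r ^ n))" by (simp add: ennreal_power assms)
  also have "\<dots> = ennreal (1 / (1 - r))"
    by (rule suminf_ennreal_eq) (use assms in \<open>auto intro: geometric_sums\<close>)
  finally show ?thesis .
qed

lemma G_meas: "G a b \<in> borel_measurable M"
  unfolding G_def[abs_def] by measurable

lemma Mx_le_G: assumes "0 \<le> y" shows "Mx M X Y y t \<le> (\<integral>\<^sup>+\<omega>. G y y \<omega> \<partial>M)"
  unfolding Mx_def
proof (rule nn_integral_mono_AE)
  show "AE \<omega> in M. ennreal (exp (t * Wx X Y y \<omega>)) \<le> G y y \<omega>"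
    using AE_exists
  proof eventually_elim
    case (elim \<omega>)
    then show ?case by (rule W_le_G) (use assms in auto)
  qed
qed

lemma Mx_bound:
  assumes "phi s = ennreal r" "0 \<le> r" "r < 1" "0 \<le> y"
  shows "Mx M X Y y t \<le> ennreal (exp (s * y)) * ennreal (1 / (1 - r)) * Cs s"
proof -
  have "Mx M X Y y t \<le> (\<integral>\<^sup>+\<omega>. G y y \<omega> \<partial>M)" by (rule Mx_le_G) fact
  also have "\<dots> \<le> ennreal (exp (s * (if 0 \<le> s then y else y))) * (\<Sum>n. phi s ^ n) * Cs s"
    by (rule G_int)
  also have "\<dots> = ennreal (exp (s * y)) * ennreal (1 / (1 - r)) * Cs s"
    using geom[OF assms(2,3)] assms(1) by simp
  finally show ?thesis .
qed

lemma Nx_stable: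
  assumes ex: "\<forall>x. \<exists>m. x < (\<Sum>i\<le>m. X i \<omega>)" and "x \<le> y" "y < (\<Sum>i\<le>Nx X x \<omega>. X i \<omega>)"
  shows "Nx X y \<omega> = Nx X x \<omega>"
proof (rule Nx_eq)
  show "y < (\<Sum>i\<le>Nx X x \<omega>. X i \<omega>)" by fact
  fix k assume "k < Nx X x \<omega>"
  then have "k < (LEAST m. x < (\<Sum>i\<le>m. X i \<omega>))" by (simp add: Nx_def)
  then have "\<not> x < (\<Sum>i\<le>k. X i \<omega>)" by (rule not_less_Least)
  then show "(\<Sum>i\<le>k. X i \<omega>) \<le> y" using assms(2) by linarith
qed

lemma right_cont:
  assumes "phi s = ennreal r" "0 \<le> r" "r < 1" "Cs s < \<top>" "0 \<le> x"
  shows "continuous (at_right x) (\<lambda>y. Mx M X Y y t)"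
  unfolding continuous_within
proof (rule tendsto_at_right_sequentially[where b="x+1"])
  show "x < x + 1" by simp
  fix S :: "nat \<Rightarrow> real" assume S: "\<And>n. x < S n" "\<And>n. S n < x + 1" "decseq S" "S \<longlonglongrightarrow> x"
  have [measurable]: "Wx X Y y \<in> borel_measurable M" for y by (rule Wx_meas[OF mX mY])
  have [measurable]: "G a b \<in> borel_measurable M" for a b by (rule G_meas)
  show "(\<lambda>n. Mx M X Y (S n) t) \<longlonglongrightarrow> Mx M X Y x t"
    unfolding Mx_def
  proof (rule nn_integral_dominated_convergence[where w="G (x+1) x"])
    show "(\<lambda>\<omega>. ennreal (exp (t * Wx X Y (S j) \<omega>))) \<in> borel_measurable M" for j by measurable
    show "(\<lambda>\<omega>. ennreal (exp (t * Wx X Y x \<omega>))) \<in> borel_measurable M" by measurable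
    show "G (x+1) x \<in> borel_measurable M" by measurable
    show "AE \<omega> in M. ennreal (exp (t * Wx X Y (S j) \<omega>)) \<le> G (x + 1) x \<omega>" for j
      using AE_exists
    proof eventually_elim
      case (elim \<omega>)
      show ?case by (rule W_le_G[OF elim]) (use S(1)[of j] S(2)[of j] assms(5) in auto)
    qed
    have "(\<integral>\<^sup>+\<omega>. G (x+1) x \<omega> \<partial>M) \<le> ennreal (exp (s * (if 0 \<le> s then x+1 else x))) * (\<Sum>n. phi s ^ n) * Cs s"
      by (rule G_int)
    also have "\<dots> = ennreal (exp (s * (if 0 \<le> s then x+1 else x))) * ennreal (1 / (1 - r)) * Cs s"
      using geom[OF assms(2,3)] assms(1) by simp
    also have "\<dots> < \<infinity>" using assms(4) by (simp add: ennreal_mult_less_top)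
    finally show "(\<integral>\<^sup>+\<omega>. G (x+1) x \<omega> \<partial>M) < \<infinity>" .
    show "AE \<omega> in M. (\<lambda>n. ennreal (exp (t * Wx X Y (S n) \<omega>))) \<longlonglongrightarrow> ennreal (exp (t * Wx X Y x \<omega>))"
      using AE_exists
    proof eventually_elim
      case (elim \<omega>)
      have "x < (\<Sum>i\<le>Nx X x \<omega>. X i \<omega>)"
        using Nx_props(1)[of x X \<omega>] elim by (simp add: lessThan_Suc_atMost)
      then have ev: "eventually (\<lambda>n. S n < (\<Sum>i\<le>Nx X x \<omega>. X i \<omega>)) sequentially"
        by (rule order_tendstoD(2)[OF S(4)])
      show ?case
      proof (rule tendsto_eventually)
        show "eventually (\<lambda>n. ennreal (exp (t * Wx X Y (S n) \<omega>)) = ennreal (exp (t * Wx X Y x \<omega>))) sequentially"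
          using ev
        proof eventually_elim
          case (elim n)
          have "Nx X (S n) \<omega> = Nx X x \<omega>"
            by (rule Nx_stable) (use elim \<open>\<forall>x. \<exists>m. x < (\<Sum>i\<le>m. X i \<omega>)\<close> S(1)[of n] in auto)
          then show ?case by (simp add: Wx_def)
        qed
      qed
    qed
  qed
qed

lemma phi_lt1:
  assumes nd: "\<not> (\<exists>c. AE \<omega> in M. X 0 \<omega> = c)" and s: "s \<in> interior (Dt M X Y t)"
  shows "\<exists>r. phi s = ennreal r \<and> 0 \<le> r \<and> r < 1"
proof -
  have Dt_eq: "\<And>u. u \<in> Dt M X Y t \<longleftrightarrow> phi u \<le> 1" by (simp add: Dt_def phi_def)
  obtain e where e: "e > 0" "ball s e \<subseteq> Dt M X Y t" using s by (auto simp: mem_interior)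
  define s1 where "s1 = s - e/2"
  define s2 where "s2 = s + e/2"
  have "s1 \<in> ball s e" "s2 \<in> ball s e" using e(1) by (auto simp: s1_def s2_def dist_real_def)
  then have p1: "phi s1 \<le> 1" and p2: "phi s2 \<le> 1" using e(2) Dt_eq by auto
  define a1 where "a1 \<omega> = t * Y 0 \<omega> - s1 * X 0 \<omega>" for \<omega>
  define a2 where "a2 \<omega> = t * Y 0 \<omega> - s2 * X 0 \<omega>" for \<omega>
  define f where "f \<omega> = exp (t * Y 0 \<omega> - s * X 0 \<omega>)" for \<omega>
  define d where "d \<omega> = (1/2) * exp (a1 \<omega>) + (1/2) * exp (a2 \<omega>) - f \<omega>" for \<omega>
  have mid: "t * Y 0 \<omega> - s * X 0 \<omega> = (1/2) * a1 \<omega> + (1 - 1/2) * a2 \<omega>" for \<omega>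
    by (simp add: a1_def a2_def s1_def s2_def algebra_simps)
  have dpos: "0 < d \<omega>" if "a1 \<omega> \<noteq> a2 \<omega>" for \<omega>
    using exp_strict_convex[OF that, of "1/2"] unfolding d_def f_def mid by simp
  have dnn: "0 \<le> d \<omega>" for \<omega>
    using dpos[of \<omega>] unfolding d_def f_def mid by (cases "a1 \<omega> = a2 \<omega>") auto
  have [measurable]: "a1 \<in> borel_measurable M" "a2 \<in> borel_measurable M" "f \<in> borel_measurable M"
    unfolding a1_def[abs_def] a2_def[abs_def] f_def[abs_def] by measurable
  have [measurable]: "d \<in> borel_measurable M" unfolding d_def[abs_def] by measurable
  have "phi s + (\<integral>\<^sup>+\<omega>. ennreal (d \<omega>) \<partial>M) = (\<integral>\<^sup>+\<omega>. ennreal (f \<omega>) + ennreal (d \<omega>) \<partial>M)"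
    unfolding phi_def f_def[symmetric] by (rule nn_integral_add[symmetric]) measurable
  also have "\<dots> = (\<integral>\<^sup>+\<omega>. ennreal (1/2) * ennreal (exp (a1 \<omega>)) + ennreal (1/2) * ennreal (exp (a2 \<omega>)) \<partial>M)"
  proof (rule nn_integral_cong)
    fix \<omega>
    have "ennreal (f \<omega>) + ennreal (d \<omega>) = ennreal (f \<omega> + d \<omega>)"
      using dnn[of \<omega>] by (simp add: f_def)
    also have "f \<omega> + d \<omega> = (1/2) * exp (a1 \<omega>) + (1/2) * exp (a2 \<omega>)" by (simp add: d_def)
    also have "ennreal \<dots> = ennreal (1/2) * ennreal (exp (a1 \<omega>)) + ennreal (1/2) * ennreal (exp (a2 \<omega>))"
    proof -
      have n1: "0 \<le> (1/2) * exp (a1 \<omega>)" and n2: "0 \<le> (1/2) * exp (a2 \<omega>)" by auto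
      have q1: "ennreal ((1/2) * exp (a1 \<omega>)) = ennreal (1/2) * ennreal (exp (a1 \<omega>))" by (rule ennreal_mult) auto
      have q2: "ennreal ((1/2) * exp (a2 \<omega>)) = ennreal (1/2) * ennreal (exp (a2 \<omega>))" by (rule ennreal_mult) auto
      show ?thesis by (simp only: ennreal_plus[OF n1 n2] q1 q2)
    qed
    finally show "ennreal (f \<omega>) + ennreal (d \<omega>) = ennreal (1/2) * ennreal (exp (a1 \<omega>)) + ennreal (1/2) * ennreal (exp (a2 \<omega>))" .
  qed
  also have "\<dots> = ennreal (1/2) * phi s1 + ennreal (1/2) * phi s2"
    by (simp add: nn_integral_add nn_integral_cmult phi_def a1_def a2_def)
  also have "\<dots> \<le> ennreal (1/2) * 1 + ennreal (1/2) * 1"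
    by (intro add_mono mult_left_mono p1 p2) auto
  also have "\<dots> = 1"
  proof -
    have "ennreal (1/2) + ennreal (1/2) = ennreal (1/2 + 1/2)" by (rule ennreal_plus[symmetric]) auto
    then show ?thesis by simp
  qed
  finally have tot: "phi s + (\<integral>\<^sup>+\<omega>. ennreal (d \<omega>) \<partial>M) \<le> 1" .
  have "phi s < 1"
  proof (rule ccontr)
    assume "\<not> phi s < 1"
    then have "1 \<le> phi s" by (simp add: not_less)
    then have "1 + (\<integral>\<^sup>+\<omega>. ennreal (d \<omega>) \<partial>M) \<le> 1 + 0"
      using tot by (metis add.right_neutral add_right_mono order_trans)
    then have "(\<integral>\<^sup>+\<omega>. ennreal (d \<omega>) \<partial>M) = 0" by (simp add: ennreal_add_left_cancel_le)
    then have "AE \<omega> in M. ennreal (d \<omega>) = 0" by (subst (asm) nn_integral_0_iff_AE) auto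
    then have "AE \<omega> in M. X 0 \<omega> = 0"
    proof eventually_elim
      case (elim \<omega>)
      then have "\<not> 0 < d \<omega>" using ennreal_eq_0_iff by (metis not_le)
      then have "a1 \<omega> = a2 \<omega>" using dpos by blast
      then have "e * X 0 \<omega> = 0" by (simp add: a1_def a2_def s1_def s2_def algebra_simps)
      then show ?case using e(1) by simp
    qed
    then show False using nd by blast
  qed
  moreover have "phi s \<noteq> \<top>" using \<open>phi s < 1\<close> by auto
  ultimately show ?thesis
    by (cases "phi s") (auto simp: ennreal_1[symmetric] ennreal_less_iff simp del: ennreal_1)
qed

lemma beta_moment:
  assumes b: "betaX M X < ereal h" and h: "h < 0"
  shows "(\<integral>\<^sup>+\<omega>. ennreal (exp (- h * X 0 \<omega>)) \<partial>M) < \<top>"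
proof -
  obtain b' where b': "betaX M X < ereal b'" "ereal b' < ereal h" using ereal_dense2[OF b] by blast
  then have "b' < h" by simp
  have "eventually (\<lambda>x::real. (let p = measure M {\<omega> \<in> space M. X 0 \<omega> > x} in
     if p > 0 then ereal (ln p / x) else -\<infinity>) < ereal b') at_top"
    using b'(1) unfolding betaX_def by (rule Limsup_lessD)
  then obtain x0 where x0: "\<And>x. x \<ge> x0 \<Longrightarrow> (let p = measure M {\<omega> \<in> space M. X 0 \<omega> > x} in
     if p > 0 then ereal (ln p / x) else -\<infinity>) < ereal b'"
    by (auto simp: eventually_at_top_linorder)
  define x1 where "x1 = max x0 1"
  have x1: "x1 \<ge> x0" "x1 > 0" by (auto simp: x1_def)
  have tail: "measure M {\<omega> \<in> space M. X 0 \<omega> > x} \<le> exp (b' * x)" if "x \<ge> x1" for x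
  proof -
    define p where "p = measure M {\<omega> \<in> space M. X 0 \<omega> > x}"
    have xpos: "x > 0" using that x1 by linarith
    have L: "(if p > 0 then ereal (ln p / x) else -\<infinity>) < ereal b'"
    proof -
      have "x \<ge> x0" using that x1 by linarith
      from x0[OF this] show ?thesis unfolding p_def Let_def .
    qed
    show ?thesis
    proof (cases "p > 0")
      case True
      then have "ln p / x < b'" using L by simp
      then have "ln p < b' * x" using xpos by (simp add: divide_less_eq)
      then have "exp (ln p) < exp (b' * x)" by simp
      then show ?thesis using True by (simp add: p_def[symmetric])
    next
      case False
      then have "p = 0" using measure_nonneg[of M] by (simp add: p_def not_less) (meson measure_nonneg order_antisym)
      then show ?thesis by (simp add: p_def[symmetric])
    qed
  qed
  define c where "c = - h"
  have c: "c > 0" using h by (simp add: c_def)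
  define q where "q = exp (c + b')"
  have q: "0 \<le> q" "q < 1" using \<open>b' < h\<close> by (auto simp: q_def c_def)
  define A where "A = exp (c * (x1 + 1) + b' * x1)"
  define T where "T k \<omega> = ennreal (exp (c * (x1 + real k + 1))) * indicator {\<omega> \<in> space M. x1 + real k < X 0 \<omega>} \<omega>" for k \<omega>
  have [measurable]: "{\<omega> \<in> space M. x1 + real k < X 0 \<omega>} \<in> sets M" for k by measurable
  have [measurable]: "T k \<in> borel_measurable M" for k unfolding T_def[abs_def] by measurable
  have pw: "ennreal (exp (c * X 0 \<omega>)) \<le> ennreal (exp (c * x1)) + (\<Sum>k. T k \<omega>)" if "\<omega> \<in> space M" for \<omega>
  proof (cases "X 0 \<omega> \<le> x1")
    case True
    then have "ennreal (exp (c * X 0 \<omega>)) \<le> ennreal (exp (c * x1))"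
      using c by (intro ennreal_leI) (simp add: mult_left_mono)
    also have "\<dots> \<le> ennreal (exp (c * x1)) + (\<Sum>k. T k \<omega>)" by (rule add_increasing2) auto
    finally show ?thesis .
  next
    case False
    define j where "j = \<lceil>X 0 \<omega> - x1\<rceil>"
    have j1: "j \<ge> 1" using False by (simp add: j_def)
    define k where "k = nat (j - 1)"
    have rk: "real k = of_int j - 1" using j1 by (simp add: k_def)
    have "of_int j - 1 < X 0 \<omega> - x1" "X 0 \<omega> - x1 \<le> of_int j"
      unfolding j_def by (rule ceiling_correct[THEN conjunct1], rule ceiling_correct[THEN conjunct2])
    then have k1: "x1 + real k < X 0 \<omega>" and k2: "X 0 \<omega> \<le> x1 + real k + 1" using rk by linarith+
    have "ennreal (exp (c * X 0 \<omega>)) \<le> T k \<omega>"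
      using k1 k2 c that by (auto simp: T_def intro!: ennreal_leI mult_left_mono)
    also have "\<dots> \<le> (\<Sum>k. T k \<omega>)" by (rule ennreal_le_suminf)
    also have "\<dots> \<le> ennreal (exp (c * x1)) + (\<Sum>k. T k \<omega>)" by (rule add_increasing) auto
    finally show ?thesis .
  qed
  have "(\<integral>\<^sup>+\<omega>. ennreal (exp (- h * X 0 \<omega>)) \<partial>M) \<le> (\<integral>\<^sup>+\<omega>. ennreal (exp (c * x1)) + (\<Sum>k. T k \<omega>) \<partial>M)"
    by (rule nn_integral_mono) (use pw in \<open>simp add: c_def\<close>)
  also have "\<dots> = ennreal (exp (c * x1)) + (\<Sum>k. \<integral>\<^sup>+\<omega>. T k \<omega> \<partial>M)"
    by (simp add: nn_integral_add nn_integral_suminf emeasure_space_1)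
  finally have I1: "(\<integral>\<^sup>+\<omega>. ennreal (exp (- h * X 0 \<omega>)) \<partial>M) \<le> ennreal (exp (c * x1)) + (\<Sum>k. \<integral>\<^sup>+\<omega>. T k \<omega> \<partial>M)" .
  have "(\<Sum>k. \<integral>\<^sup>+\<omega>. T k \<omega> \<partial>M) \<le> (\<Sum>k. ennreal (A * q ^ k))"
  proof (rule suminf_le)
    fix k
    have "(\<integral>\<^sup>+\<omega>. T k \<omega> \<partial>M) = ennreal (exp (c * (x1 + real k + 1))) * emeasure M {\<omega> \<in> space M. x1 + real k < X 0 \<omega>}"
      unfolding T_def by (rule nn_integral_cmult_indicator) measurable
    also have "\<dots> = ennreal (exp (c * (x1 + real k + 1)) * measure M {\<omega> \<in> space M. x1 + real k < X 0 \<omega>})"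
      by (simp add: emeasure_eq_measure ennreal_mult)
    also have "\<dots> \<le> ennreal (exp (c * (x1 + real k + 1)) * exp (b' * (x1 + real k)))"
      by (intro ennreal_leI mult_left_mono tail) auto
    also have "exp (c * (x1 + real k + 1)) * exp (b' * (x1 + real k)) = A * q ^ k"
      by (simp add: A_def q_def exp_add[symmetric] exp_of_nat_mult[symmetric] algebra_simps)
    finally show "(\<integral>\<^sup>+\<omega>. T k \<omega> \<partial>M) \<le> ennreal (A * q ^ k)" .
  qed auto
  also have "(\<Sum>k. ennreal (A * q ^ k)) = ennreal (A * (1 / (1 - q)))"
  proof (rule suminf_ennreal_eq)
    show "0 \<le> A * q ^ k" for k using q by (simp add: A_def)
    have "(\<lambda>k. q ^ k) sums (1 / (1 - q))" by (rule geometric_sums) (use q in auto)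
    then show "(\<lambda>k. A * q ^ k) sums (A * (1 / (1 - q)))" by (rule sums_mult)
  qed
  finally have "(\<Sum>k. \<integral>\<^sup>+\<omega>. T k \<omega> \<partial>M) \<le> ennreal (A * (1 / (1 - q)))" .
  with I1 have "(\<integral>\<^sup>+\<omega>. ennreal (exp (- h * X 0 \<omega>)) \<partial>M) \<le> ennreal (exp (c * x1)) + ennreal (A * (1 / (1 - q)))"
    by (meson add_left_mono order_trans)
  also have "\<dots> < \<top>" by simp
  finally show ?thesis .
qed

end



theorem lemma6p2:
  fixes M :: "'a measure" and X Y :: "nat \<Rightarrow> 'a \<Rightarrow> real" and t :: real
  assumes "prob_space M"
    and "\<And>n. X n \<in> borel_measurable M" and "\<And>n. Y n \<in> borel_measurable M"
    and "prob_space.indep_vars M (\<lambda>_. borel \<Otimes>\<^sub>M borel) (\<lambda>n \<omega>. (X n \<omega>, Y n \<omega>)) UNIV"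
    and "\<And>n. distr M (borel \<Otimes>\<^sub>M borel) (\<lambda>\<omega>. (X n \<omega>, Y n \<omega>))
              = distr M (borel \<Otimes>\<^sub>M borel) (\<lambda>\<omega>. (X 0 \<omega>, Y 0 \<omega>))"
    and "\<not> (\<exists>c. AE \<omega> in M. X 0 \<omega> = c)" and "\<not> (\<exists>c. AE \<omega> in M. Y 0 \<omega> = c)"
    and "AE \<omega> in M. (SUP n. ereal (\<Sum>i\<le>n. X i \<omega>)) = \<infinity>"
    and "betaX M X < ht M X Y t" and "ht M X Y t < \<infinity>"
    and "interior (Dt M X Y t) \<noteq> {}"
  shows "(\<forall>x\<ge>0. continuous (at_right x) (\<lambda>y. Mx M X Y y t))
    \<and> (\<forall>\<epsilon>>0. real_of_ereal (ht M X Y t) + \<epsilon> \<in> interior (Dt M X Y t) \<longrightarrow>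
         (\<exists>K>0. \<forall>x>0. Mx M X Y x t \<le> ennreal (K * exp ((real_of_ereal (ht M X Y t) + \<epsilon>) * x)))
       \<and> ((real_of_ereal (ht M X Y t) \<ge> 0 \<or> \<epsilon> < \<bar>real_of_ereal (ht M X Y t)\<bar>) \<longrightarrow>
            Hfun M X (real_of_ereal (ht M X Y t)) < \<top> \<and> rho M X Y t \<epsilon> < 1 \<and>
            (\<forall>x>0. Mx M X Y x t \<le> Hfun M X (real_of_ereal (ht M X Y t)) / (1 - rho M X Y t \<epsilon>)
                      * ennreal (exp ((real_of_ereal (ht M X Y t) + \<epsilon>) * x)))))"
proof -
  have "L M X Y" unfolding L_def L_axioms_def using assms(1-5,8) by auto
  then interpret L M X Y t .
  have nd: "\<not> (\<exists>c. AE \<omega> in M. X 0 \<omega> = c)" by fact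
  have "ht M X Y t \<noteq> \<infinity>" using assms(10) by auto
  moreover have "ht M X Y t \<noteq> -\<infinity>" using assms(9) by auto
  ultimately obtain h where hh: "ht M X Y t = ereal h" by (cases "ht M X Y t") auto
  have rh: "real_of_ereal (ht M X Y t) = h" by (simp add: hh)
  have hle: "h \<le> u" if "u \<in> Dt M X Y t" for u
  proof -
    have "ereal h \<le> ereal u" unfolding hh[symmetric] ht_def by (rule Inf_lower) (use that in auto)
    then show ?thesis by simp
  qed
  have hlt: "h < u" if uin: "u \<in> interior (Dt M X Y t)" for u
  proof -
    obtain e where e: "e > 0" "ball u e \<subseteq> Dt M X Y t" using uin by (auto simp: mem_interior)
    have "u - e/2 \<in> ball u e" using e(1) by (auto simp: dist_real_def)
    then have "u - e/2 \<in> Dt M X Y t" using e(2) by blast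
    then have "h \<le> u - e/2" by (rule hle)
    then show ?thesis using e(1) by linarith
  qed
  have int1: "(\<integral>\<^sup>+\<omega>. ennreal 1 \<partial>M) = 1" by (simp add: emeasure_space_1)
  have Hfin: "Hfun M X h < \<top>"
  proof (cases "0 \<le> h")
    case True
    then have "Hfun M X h = 1 + 1" unfolding Hfun_def using int1 by simp
    then show ?thesis by simp
  next
    case False
    then have "(\<integral>\<^sup>+\<omega>. ennreal (exp (- h * X 0 \<omega>)) \<partial>M) < \<top>"
      using assms(9) hh by (intro beta_moment) auto
    then show ?thesis unfolding Hfun_def using False by simp
  qed
  have H1: "1 \<le> Hfun M X h" unfolding Hfun_def by (rule add_increasing) auto
  have Cle: "Cs u \<le> Hfun M X h" if "u \<in> interior (Dt M X Y t)" for u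
  proof (cases "0 \<le> u")
    case True
    then have "Cs u = 1" unfolding Cs_def gs_def using int1 by simp
    then show ?thesis using H1 by simp
  next
    case False
    have "h < u" using hlt that by blast
    then have h0: "min 0 h = h" using False by simp
    have "Cs u \<le> (\<integral>\<^sup>+\<omega>. ennreal (exp (- h * X 0 \<omega>)) + ennreal 1 \<partial>M)"
      unfolding Cs_def
    proof (rule nn_integral_mono)
      fix \<omega>
      have "exp (- u * X 0 \<omega>) \<le> exp (- h * X 0 \<omega>) + 1"
      proof (cases "0 \<le> X 0 \<omega>")
        case True
        then have "- u * X 0 \<omega> \<le> - h * X 0 \<omega>" using \<open>h < u\<close> by (intro mult_right_mono) auto
        then have "exp (- u * X 0 \<omega>) \<le> exp (- h * X 0 \<omega>)" by simp
        then show ?thesis by linarith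
      next
        case f2: False
        have "0 \<le> u * X 0 \<omega>" using False f2 by (intro mult_nonpos_nonpos) auto
        then have "- u * X 0 \<omega> \<le> 0" by simp
        then have "exp (- u * X 0 \<omega>) \<le> 1" by simp
        then show ?thesis using exp_gt_zero[of "- h * X 0 \<omega>"] by linarith
      qed
      then show "ennreal (gs u (X 0 \<omega>)) \<le> ennreal (exp (- h * X 0 \<omega>)) + ennreal 1"
      proof -
        have e1: "ennreal (exp (- h * X 0 \<omega>)) + ennreal 1 = ennreal (exp (- h * X 0 \<omega>) + 1)"
          by (rule ennreal_plus[symmetric]) auto
        have e2: "gs u (X 0 \<omega>) = exp (- u * X 0 \<omega>)" using False by (simp add: gs_def)
        show ?thesis unfolding e1 e2 by (rule ennreal_leI) fact
      qed
    qed
    also have "\<dots> = (\<integral>\<^sup>+\<omega>. ennreal (exp (- h * X 0 \<omega>)) \<partial>M) + (\<integral>\<^sup>+\<omega>. ennreal 1 \<partial>M)"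
      by (rule nn_integral_add) auto
    also have "\<dots> = Hfun M X h" unfolding Hfun_def h0 int1 by simp
    finally show ?thesis .
  qed
  show ?thesis
    unfolding rh
  proof (intro conjI allI impI)
    fix x :: real assume "0 \<le> x"
    obtain s0 where s0: "s0 \<in> interior (Dt M X Y t)" using assms(11) by auto
    obtain r where r: "phi s0 = ennreal r" "0 \<le> r" "r < 1" using phi_lt1[OF nd s0] by blast
    have "Cs s0 < \<top>" using Cle[OF s0] Hfin by (rule le_less_trans)
    then show "continuous (at_right x) (\<lambda>y. Mx M X Y y t)"
      by (rule right_cont[OF r]) fact
  next
    fix \<epsilon> :: real assume "0 < \<epsilon>" and s: "h + \<epsilon> \<in> interior (Dt M X Y t)"
    obtain r where r: "phi (h + \<epsilon>) = ennreal r" "0 \<le> r" "r < 1" using phi_lt1[OF nd s] by blast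
    have rho: "rho M X Y t \<epsilon> = ennreal r" using r(1) by (simp add: rho_def phi_def rh)
    obtain H where H: "Hfun M X h = ennreal H" "0 \<le> H" using Hfin by (cases "Hfun M X h") auto
    have "1 \<le> H" using H1 H by (simp add: ennreal_1[symmetric] del: ennreal_1)
    have eq: "Hfun M X h / (1 - rho M X Y t \<epsilon>) = ennreal (H / (1 - r))"
      unfolding rho H(1) using r H by (simp add: ennreal_1[symmetric] ennreal_minus divide_ennreal del: ennreal_1)
    have bound: "Mx M X Y x t \<le> ennreal (H / (1 - r)) * ennreal (exp ((h + \<epsilon>) * x))" if "0 < x" for x
    proof -
      have "Mx M X Y x t \<le> ennreal (exp ((h + \<epsilon>) * x)) * ennreal (1 / (1 - r)) * Cs (h + \<epsilon>)"
        by (rule Mx_bound[OF r]) (use that in auto)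
      also have "\<dots> \<le> ennreal (exp ((h + \<epsilon>) * x)) * ennreal (1 / (1 - r)) * ennreal H"
        using Cle[OF s] H(1) by (intro mult_left_mono) auto
      also have "\<dots> = ennreal (H / (1 - r)) * ennreal (exp ((h + \<epsilon>) * x))"
        using r H by (simp add: ennreal_mult'[symmetric] mult_ac)
      finally show ?thesis .
    qed
    show "\<exists>K>0. \<forall>x>0. Mx M X Y x t \<le> ennreal (K * exp ((h + \<epsilon>) * x))"
    proof (intro exI[of _ "H / (1 - r)"] conjI allI impI)
      show "0 < H / (1 - r)" using \<open>1 \<le> H\<close> r by simp
      fix x :: real assume "0 < x"
      then show "Mx M X Y x t \<le> ennreal (H / (1 - r) * exp ((h + \<epsilon>) * x))"
      proof -
        have "ennreal (H / (1 - r) * exp ((h + \<epsilon>) * x)) = ennreal (H / (1 - r)) * ennreal (exp ((h + \<epsilon>) * x))"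
          by (rule ennreal_mult) (use r H in auto)
        then show ?thesis using bound[OF \<open>0 < x\<close>] by simp
      qed
    qed
    show "Hfun M X h < \<top>" by (rule Hfin)
    show "rho M X Y t \<epsilon> < 1" unfolding rho using r by (simp add: ennreal_less_iff ennreal_1[symmetric] del: ennreal_1)
    fix x :: real assume "0 < x"
    show "Mx M X Y x t \<le> Hfun M X h / (1 - rho M X Y t \<epsilon>) * ennreal (exp ((h + \<epsilon>) * x))"
      unfolding eq using bound[OF \<open>0 < x\<close>] .
  qed
qed


end
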